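(* (Darboux transformation.) Let $(\Omega(\mathcal{A}),\mathrm{d},\bar{\mathrm{d}})$ be a bidifferential graded algebra and let $\phi\in\mathcal{A}$ satisfy $\bar{\mathrm{d}}\,\mathrm{d}\,\phi=(\mathrm{d}\phi)(\mathrm{d}\phi)$. Let $\Delta'\in\mathcal{A}$ satisfy $\bar{\mathrm{d}}\Delta'=(\mathrm{d}\Delta')\Delta'$, let $\theta\in\mathcal{A}$ be invertible with $$\bar{\mathrm{d}}\theta=(\mathrm{d}\phi)\,\theta+(\mathrm{d}\theta)\,\Delta',$$ and let $C'\in\mathcal{A}$ with $\mathrm{d}C'=0$. Set $\phi':=\phi+\theta\Delta'\theta^{-1}-C'$. Then $$\bar{\mathrm{d}}(\theta\Delta'\theta^{-1})=(\mathrm{d}\phi')\,\theta\Delta'\theta^{-1}-\theta\Delta'\theta^{-1}\,\mathrm{d}\phi,$$ and $\phi'$ satisfies $\bar{\mathrm{d}}\,\mathrm{d}\,\phi'=(\mathrm{d}\phi')(\mathrm{d}\phi')$.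
   Context: $\mathcal{A}$ is a unital associative algebra over $\mathbb{C}$ with identity $I$. A bidifferential graded algebra $(\Omega(\mathcal{A}),\mathrm{d},\bar{\mathrm{d}})$ consists of a graded associative algebra $\Omega(\mathcal{A})=\bigoplus_{r\ge 0}\Omega^r(\mathcal{A})$ with $\Omega^0(\mathcal{A})=\mathcal{A}$ (each $\Omega^r(\mathcal{A})$ an $\mathcal{A}$-bimodule) together with two linear maps $\mathrm{d},\bar{\mathrm{d}}:\Omega^r(\mathcal{A})\to\Omega^{r+1}(\mathcal{A})$ satisfying the graded Leibniz rule $\mathrm{d}(\alpha\beta)=(\mathrm{d}\alpha)\beta+(-1)^r\alpha\,\mathrm{d}\beta$ for $\alpha\in\Omega^r(\mathcal{A})$ (and likewise for $\bar{\mathrm{d}}$), and $\mathrm{d}^2=\bar{\mathrm{d}}^2=0$, $\mathrm{d}\bar{\mathrm{d}}+\bar{\mathrm{d}}\mathrm{d}=0$. *)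

theory Defs
  imports Complex_Main
begin

text \<open>A graded algebra Omega = direct sum of Omega^r, modelled as a type 'w carrying a
unital ring structure, a complex scalar action sc making it a unital associative
complex algebra, and degree subspaces G r.  The algebra A is G 0.\<close>

definition complex_algebra :: "(complex \<Rightarrow> 'w::ring_1 \<Rightarrow> 'w) \<Rightarrow> bool" where
  "complex_algebra sc \<longleftrightarrow>
     (\<forall>x. sc 1 x = x) \<and>
     (\<forall>a b x. sc (a * b) x = sc a (sc b x)) \<and>
     (\<forall>a b x. sc (a + b) x = sc a x + sc b x) \<and>
     (\<forall>a x y. sc a (x + y) = sc a x + sc a y) \<and>
     (\<forall>a x y. sc a (x * y) = sc a x * y) \<and>
     (\<forall>a x y. sc a (x * y) = x * sc a y)"

definition graded_algebra ::
  "(complex \<Rightarrow> 'w::ring_1 \<Rightarrow> 'w) \<Rightarrow> (nat \<Rightarrow> 'w set) \<Rightarrow> bool" where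
  "graded_algebra sc G \<longleftrightarrow>
     complex_algebra sc \<and>
     (\<forall>r. 0 \<in> G r \<and> (\<forall>x\<in>G r. \<forall>y\<in>G r. x + y \<in> G r) \<and> (\<forall>c. \<forall>x\<in>G r. sc c x \<in> G r)) \<and>
     (\<forall>r s. \<forall>x\<in>G r. \<forall>y\<in>G s. x * y \<in> G (r + s)) \<and>
     1 \<in> G 0 \<and>
     (\<forall>x. \<exists>N f. finite N \<and> (\<forall>r\<in>N. f r \<in> G r) \<and> x = sum f N) \<and>
     (\<forall>N f. finite N \<longrightarrow> (\<forall>r\<in>N. f r \<in> G r) \<longrightarrow> sum f N = 0 \<longrightarrow> (\<forall>r\<in>N. f r = 0))"

definition graded_derivation ::
  "(complex \<Rightarrow> 'w::ring_1 \<Rightarrow> 'w) \<Rightarrow> (nat \<Rightarrow> 'w set) \<Rightarrow> ('w \<Rightarrow> 'w) \<Rightarrow> bool" where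
  "graded_derivation sc G D \<longleftrightarrow>
     (\<forall>x y. D (x + y) = D x + D y) \<and>
     (\<forall>c x. D (sc c x) = sc c (D x)) \<and>
     (\<forall>r. \<forall>x\<in>G r. D x \<in> G (Suc r)) \<and>
     (\<forall>r. \<forall>a\<in>G r. \<forall>b. D (a * b) = D a * b + (-1) ^ r * (a * D b))"

definition bidifferential_graded_algebra ::
  "(complex \<Rightarrow> 'w::ring_1 \<Rightarrow> 'w) \<Rightarrow> (nat \<Rightarrow> 'w set) \<Rightarrow> ('w \<Rightarrow> 'w) \<Rightarrow> ('w \<Rightarrow> 'w) \<Rightarrow> bool" where
  "bidifferential_graded_algebra sc G d db \<longleftrightarrow>
     graded_algebra sc G \<and> graded_derivation sc G d \<and> graded_derivation sc G db \<and>
     (\<forall>x. d (d x) = 0) \<and> (\<forall>x. db (db x) = 0) \<and> (\<forall>x. d (db x) + db (d x) = 0)"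

end

theory Submission
  imports Defs
begin

lemma gd_add: "graded_derivation sc G D \<Longrightarrow> D (x + y) = D x + D y"
  unfolding graded_derivation_def by blast
lemma gd_minus: "graded_derivation sc G D \<Longrightarrow> D (x - y) = D x - D y"
proof -
  assume a: "graded_derivation sc G D"
  have "D x = D ((x - y) + y)" by simp
  also have "\<dots> = D (x - y) + D y" using gd_add[OF a] .
  finally show ?thesis by (simp add: algebra_simps)
qed
lemma gd_mul0: "graded_derivation sc G D \<Longrightarrow> a \<in> G 0 \<Longrightarrow> D (a * b) = D a * b + a * D b"
  unfolding graded_derivation_def by force
lemma gd_mul1: "graded_derivation sc G D \<Longrightarrow> a \<in> G 1 \<Longrightarrow> D (a * b) = D a * b - a * D b"
  unfolding graded_derivation_def
  by (metis (no_types, lifting) One_nat_def mult_minus_left power_one_right diff_conv_add_uminus mult_1)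
lemma gd_G: "graded_derivation sc G D \<Longrightarrow> a \<in> G 0 \<Longrightarrow> D a \<in> G 1"
  unfolding graded_derivation_def by (metis One_nat_def)
lemma gd_one: "graded_derivation sc G D \<Longrightarrow> 1 \<in> G 0 \<Longrightarrow> D 1 = 0"
  using gd_mul0[of sc G D 1 1] by simp
lemma gd_inv: "graded_derivation sc G D \<Longrightarrow> 1 \<in> G 0 \<Longrightarrow> t \<in> G 0 \<Longrightarrow> ti \<in> G 0
   \<Longrightarrow> t * ti = 1 \<Longrightarrow> ti * t = 1 \<Longrightarrow> D ti = - (ti * D t * ti)"
proof -
  assume a: "graded_derivation sc G D" "1 \<in> G 0" "t \<in> G 0" "ti \<in> G 0" "t * ti = 1" "ti * t = 1"
  have "0 = D (t * ti)" using gd_one[OF a(1,2)] a(5) by simp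
  also have "\<dots> = D t * ti + t * D ti" using gd_mul0[OF a(1,3)] .
  finally have "ti * (D t * ti + t * D ti) = 0" by simp
  hence "ti * D t * ti + (ti * t) * D ti = 0" by (simp add: algebra_simps)
  thus ?thesis using a(6) by (simp add: algebra_simps eq_neg_iff_add_eq_0)
qed

theorem mainTheorem4:
  fixes sc :: "complex \<Rightarrow> 'w::ring_1 \<Rightarrow> 'w" and G :: "nat \<Rightarrow> 'w set"
    and d db :: "'w \<Rightarrow> 'w" and \<phi> \<Delta> \<theta> \<theta>i C :: 'w
  assumes "bidifferential_graded_algebra sc G d db"
    and "\<phi> \<in> G 0" and "\<Delta> \<in> G 0" and "\<theta> \<in> G 0" and "\<theta>i \<in> G 0" and "C \<in> G 0"
    and "db (d \<phi>) = d \<phi> * d \<phi>"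
    and "db \<Delta> = d \<Delta> * \<Delta>"
    and "\<theta> * \<theta>i = 1" and "\<theta>i * \<theta> = 1"
    and "db \<theta> = d \<phi> * \<theta> + d \<theta> * \<Delta>"
    and "d C = 0"
  shows "let \<phi>' = \<phi> + \<theta> * \<Delta> * \<theta>i - C in
           db (\<theta> * \<Delta> * \<theta>i) = d \<phi>' * (\<theta> * \<Delta> * \<theta>i) - (\<theta> * \<Delta> * \<theta>i) * d \<phi>
         \<and> db (d \<phi>') = d \<phi>' * d \<phi>'"
proof -
  note B = assms(1)[unfolded bidifferential_graded_algebra_def]
  have ga: "graded_algebra sc G" using B by (rule conjunct1)
  have gd: "graded_derivation sc G d" using B[THEN conjunct2] by (rule conjunct1)
  have gdb: "graded_derivation sc G db" using B[THEN conjunct2, THEN conjunct2] by (rule conjunct1)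
  have dd: "\<And>x. d (d x) = 0" using B[THEN conjunct2, THEN conjunct2, THEN conjunct2, THEN conjunct1] by (rule spec)
  have ddb0: "\<And>x. d (db x) + db (d x) = 0" using B[THEN conjunct2, THEN conjunct2, THEN conjunct2, THEN conjunct2, THEN conjunct2] by (rule spec)
  note GA = ga[unfolded graded_algebra_def]
  have one: "1 \<in> G 0" using GA[THEN conjunct2, THEN conjunct2, THEN conjunct2, THEN conjunct1] .
  have mul: "\<forall>r s. \<forall>x\<in>G r. \<forall>y\<in>G s. x * y \<in> G (r + s)" using GA[THEN conjunct2, THEN conjunct2, THEN conjunct1] .
  have addc: "\<forall>r. 0 \<in> G r \<and> (\<forall>x\<in>G r. \<forall>y\<in>G r. x + y \<in> G r) \<and> (\<forall>c. \<forall>x\<in>G r. sc c x \<in> G r)" using GA[THEN conjunct2, THEN conjunct1] .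
  have mulG: "\<And>x y. x \<in> G 0 \<Longrightarrow> y \<in> G 0 \<Longrightarrow> x * y \<in> G 0"
    using mul[rule_format, of _ 0 _ 0] by simp
  have ddb: "\<And>x. d (db x) = - db (d x)" using ddb0 by (simp add: eq_neg_iff_add_eq_0)
  define T where "T = \<theta> * \<Delta> * \<theta>i"
  have TG: "T \<in> G 0" unfolding T_def using mulG[OF mulG[OF assms(4) assms(3)] assms(5)] by simp
  have ThD: "\<theta> * \<Delta> \<in> G 0" using mulG[OF assms(4) assms(3)] by simp
  have dthi: "d \<theta>i = - (\<theta>i * d \<theta> * \<theta>i)" using gd_inv[OF gd one assms(4,5,9,10)] .
  have dbthi: "db \<theta>i = - (\<theta>i * db \<theta> * \<theta>i)" using gd_inv[OF gdb one assms(4,5,9,10)] .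
  have dT: "d T = d \<theta> * \<Delta> * \<theta>i + \<theta> * d \<Delta> * \<theta>i - T * d \<theta> * \<theta>i"
    unfolding T_def using gd_mul0[OF gd ThD] gd_mul0[OF gd assms(4)] dthi
    by (simp add: algebra_simps)
  have dbT: "db T = db \<theta> * \<Delta> * \<theta>i + \<theta> * db \<Delta> * \<theta>i - T * db \<theta> * \<theta>i"
    unfolding T_def using gd_mul0[OF gdb ThD] gd_mul0[OF gdb assms(4)] dbthi
    by (simp add: algebra_simps)
  have dphi': "d (\<phi> + T - C) = d \<phi> + d T"
    using gd_minus[OF gd] gd_add[OF gd] assms(12) by simp
  have c1: "db T = (d \<phi> + d T) * T - T * d \<phi>"
  proof -
    have e1: "\<theta>i * \<theta> = 1" by (rule assms(10))
    have "d T * T = d \<theta> * \<Delta> * (\<theta>i * \<theta>) * \<Delta> * \<theta>i + \<theta> * d \<Delta> * (\<theta>i * \<theta>) * \<Delta> * \<theta>i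
        - T * d \<theta> * (\<theta>i * \<theta>) * \<Delta> * \<theta>i"
      unfolding dT by (simp add: T_def algebra_simps)
    hence f1: "d T * T = d \<theta> * \<Delta> * \<Delta> * \<theta>i + \<theta> * d \<Delta> * \<Delta> * \<theta>i - T * d \<theta> * \<Delta> * \<theta>i"
      using e1 by (simp add: mult.assoc)
    moreover have f2: "db T = d \<phi> * T + d \<theta> * \<Delta> * \<Delta> * \<theta>i + \<theta> * d \<Delta> * \<Delta> * \<theta>i
        - T * d \<phi> * (\<theta> * \<theta>i) - T * d \<theta> * \<Delta> * \<theta>i"
      unfolding dbT assms(11) assms(8) by (simp add: T_def algebra_simps)
    show ?thesis unfolding distrib_right f1 f2 using assms(9) by (simp add: algebra_simps)
  qed
  have dphiG: "d \<phi> \<in> G 1" using gd_G[OF gd assms(2)] .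
  have dTG: "d T \<in> G 1" using gd_G[OF gd TG] .
  have addG1: "d \<phi> + d T \<in> G 1" using addc dphiG dTG by blast
  have c2: "db (d T) = (d \<phi> + d T) * d T + d T * d \<phi>"
  proof -
    have "d (db T) = d ((d \<phi> + d T) * T) - d (T * d \<phi>)" using c1 gd_minus[OF gd] by simp
    also have "\<dots> = - ((d \<phi> + d T) * d T) - d T * d \<phi>"
      using gd_mul1[OF gd addG1] gd_mul0[OF gd TG] gd_add[OF gd] dd by simp
    finally show ?thesis using ddb by (metis minus_diff_eq minus_minus diff_conv_add_uminus minus_add_distrib)
  qed
  have "db (d (\<phi> + T - C)) = d (\<phi> + T - C) * d (\<phi> + T - C)"
    unfolding dphi' using gd_add[OF gdb] assms(7) c2 by (simp add: algebra_simps)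
  thus ?thesis using c1 dphi' unfolding T_def Let_def by simp
qed

end
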